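(* There exist an (infinite) distributive meet-complemented lattice $A$ and an element $a\in A$ such that $\Box a$ does not exist, i.e., the set $\{b\in A: a\vee\neg b=1\}$ has no maximum.
   Context: A meet-complemented lattice is a lattice $(L,\le)$ such that for every $a\in L$ the element $\neg a=\max\{b\in L: a\wedge b\le c\ \text{for all } c\in L\}$ exists; it is bounded with top $1$. $\Box a$ denotes $\max\{b\in L: a\vee\neg b=1\}$ when it exists. *)

theory Defs
  imports Main
begin

definition po_on :: "'a set \<Rightarrow> ('a \<Rightarrow> 'a \<Rightarrow> bool) \<Rightarrow> bool" where
  "po_on L le \<longleftrightarrow> (\<forall>x\<in>L. le x x) \<and> (\<forall>x\<in>L. \<forall>y\<in>L. le x y \<and> le y x \<longrightarrow> x = y)
     \<and> (\<forall>x\<in>L. \<forall>y\<in>L. \<forall>z\<in>L. le x y \<and> le y z \<longrightarrow> le x z)"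

definition is_lub :: "'a set \<Rightarrow> ('a \<Rightarrow> 'a \<Rightarrow> bool) \<Rightarrow> 'a set \<Rightarrow> 'a \<Rightarrow> bool" where
  "is_lub L le S x \<longleftrightarrow> x \<in> L \<and> (\<forall>y\<in>S. le y x) \<and> (\<forall>z\<in>L. (\<forall>y\<in>S. le y z) \<longrightarrow> le x z)"

definition is_glb :: "'a set \<Rightarrow> ('a \<Rightarrow> 'a \<Rightarrow> bool) \<Rightarrow> 'a set \<Rightarrow> 'a \<Rightarrow> bool" where
  "is_glb L le S x \<longleftrightarrow> x \<in> L \<and> (\<forall>y\<in>S. le x y) \<and> (\<forall>z\<in>L. (\<forall>y\<in>S. le z y) \<longrightarrow> le z x)"

definition is_max :: "('a \<Rightarrow> 'a \<Rightarrow> bool) \<Rightarrow> 'a set \<Rightarrow> 'a \<Rightarrow> bool" where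
  "is_max le S x \<longleftrightarrow> x \<in> S \<and> (\<forall>y\<in>S. le y x)"

definition lattice_on :: "'a set \<Rightarrow> ('a \<Rightarrow> 'a \<Rightarrow> bool) \<Rightarrow> bool" where
  "lattice_on L le \<longleftrightarrow> po_on L le \<and>
     (\<forall>a\<in>L. \<forall>b\<in>L. (\<exists>x. is_lub L le {a, b} x) \<and> (\<exists>x. is_glb L le {a, b} x))"

definition lmeet :: "'a set \<Rightarrow> ('a \<Rightarrow> 'a \<Rightarrow> bool) \<Rightarrow> 'a \<Rightarrow> 'a \<Rightarrow> 'a" where
  "lmeet L le a b = (THE x. is_glb L le {a, b} x)"

definition ljoin :: "'a set \<Rightarrow> ('a \<Rightarrow> 'a \<Rightarrow> bool) \<Rightarrow> 'a \<Rightarrow> 'a \<Rightarrow> 'a" where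
  "ljoin L le a b = (THE x. is_lub L le {a, b} x)"

definition ltop :: "'a set \<Rightarrow> ('a \<Rightarrow> 'a \<Rightarrow> bool) \<Rightarrow> 'a" where
  "ltop L le = (THE x. is_max le L x)"

definition distributive_lattice_on :: "'a set \<Rightarrow> ('a \<Rightarrow> 'a \<Rightarrow> bool) \<Rightarrow> bool" where
  "distributive_lattice_on L le \<longleftrightarrow> lattice_on L le \<and>
     (\<forall>a\<in>L. \<forall>b\<in>L. \<forall>c\<in>L.
        lmeet L le a (ljoin L le b c) = ljoin L le (lmeet L le a b) (lmeet L le a c))"

definition negset :: "'a set \<Rightarrow> ('a \<Rightarrow> 'a \<Rightarrow> bool) \<Rightarrow> 'a \<Rightarrow> 'a set" where
  "negset L le a = {b \<in> L. \<forall>c\<in>L. le (lmeet L le a b) c}"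

definition lneg :: "'a set \<Rightarrow> ('a \<Rightarrow> 'a \<Rightarrow> bool) \<Rightarrow> 'a \<Rightarrow> 'a" where
  "lneg L le a = (THE x. is_max le (negset L le a) x)"

definition meet_complemented_on :: "'a set \<Rightarrow> ('a \<Rightarrow> 'a \<Rightarrow> bool) \<Rightarrow> bool" where
  "meet_complemented_on L le \<longleftrightarrow> lattice_on L le \<and>
     (\<forall>a\<in>L. \<exists>x. is_max le (negset L le a) x)"

definition boxset :: "'a set \<Rightarrow> ('a \<Rightarrow> 'a \<Rightarrow> bool) \<Rightarrow> 'a \<Rightarrow> 'a set" where
  "boxset L le a = {b \<in> L. ljoin L le a (lneg L le b) = ltop L le}"

end

theory Submission
  imports Defs
begin

definition LL :: "nat set set" where
  "LL = {S. 0 \<notin> S} \<union> {S. 0 \<in> S \<and> finite (- S)}"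

lemma LL_int: "A \<in> LL \<Longrightarrow> B \<in> LL \<Longrightarrow> A \<inter> B \<in> LL"
  unfolding LL_def by (auto simp: Compl_Int)

lemma LL_un: "A \<in> LL \<Longrightarrow> B \<in> LL \<Longrightarrow> A \<union> B \<in> LL"
  unfolding LL_def by (auto simp: Compl_Un)

lemma LL_UNIV: "UNIV \<in> LL" and LL_empty: "{} \<in> LL"
  unfolding LL_def by auto

lemma glb_LL: "A \<in> LL \<Longrightarrow> B \<in> LL \<Longrightarrow> is_glb LL (\<subseteq>) {A, B} x \<longleftrightarrow> x = A \<inter> B"
  unfolding is_glb_def using LL_int by blast

lemma lub_LL: "A \<in> LL \<Longrightarrow> B \<in> LL \<Longrightarrow> is_lub LL (\<subseteq>) {A, B} x \<longleftrightarrow> x = A \<union> B"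
  unfolding is_lub_def using LL_un by blast

lemma meet_LL: "A \<in> LL \<Longrightarrow> B \<in> LL \<Longrightarrow> lmeet LL (\<subseteq>) A B = A \<inter> B"
  unfolding lmeet_def using glb_LL by (intro the_equality) auto

lemma join_LL: "A \<in> LL \<Longrightarrow> B \<in> LL \<Longrightarrow> ljoin LL (\<subseteq>) A B = A \<union> B"
  unfolding ljoin_def using lub_LL by (intro the_equality) auto

lemma top_LL: "ltop LL (\<subseteq>) = UNIV"
  unfolding ltop_def is_max_def using LL_UNIV
  by (intro the_equality) auto

lemma negset_LL: "A \<in> LL \<Longrightarrow> negset LL (\<subseteq>) A = {B \<in> LL. A \<inter> B = {}}"
proof -
  assume A: "A \<in> LL"
  have "(\<forall>c\<in>LL. A \<inter> B \<subseteq> c) \<longleftrightarrow> A \<inter> B = {}" for B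
    using LL_empty by blast
  thus ?thesis unfolding negset_def using A by (auto simp: meet_LL)
qed

definition nn :: "nat set \<Rightarrow> nat set" where
  "nn B = (if - B \<in> LL then - B else - B - {0})"

lemma nn_max: "A \<in> LL \<Longrightarrow> is_max (\<subseteq>) (negset LL (\<subseteq>) A) x \<longleftrightarrow> x = nn A"
proof -
  assume A: "A \<in> LL"
  have n1: "nn A \<in> LL" unfolding nn_def by (auto simp: LL_def)
  have n2: "A \<inter> nn A = {}" unfolding nn_def by auto
  have n3: "y \<subseteq> nn A" if y: "y \<in> LL" "A \<inter> y = {}" for y
  proof (cases "0 \<in> y")
    case True
    with y have fy: "finite (- y)" unfolding LL_def by auto
    have "A \<subseteq> - y" using y by auto
    hence "finite A" using fy finite_subset by blast
    moreover have "0 \<notin> A" using True y by auto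
    ultimately have "- A \<in> LL" unfolding LL_def by auto
    thus ?thesis unfolding nn_def using y by auto
  next
    case False
    thus ?thesis unfolding nn_def using y by auto
  qed
  have m: "is_max (\<subseteq>) (negset LL (\<subseteq>) A) (nn A)"
    unfolding is_max_def negset_LL[OF A] using n1 n2 n3 by blast
  show ?thesis
  proof
    assume "is_max (\<subseteq>) (negset LL (\<subseteq>) A) x"
    with m show "x = nn A" unfolding is_max_def by blast
  next
    assume "x = nn A" with m show "is_max (\<subseteq>) (negset LL (\<subseteq>) A) x" by simp
  qed
qed

lemma lneg_LL: "A \<in> LL \<Longrightarrow> lneg LL (\<subseteq>) A = nn A"
  unfolding lneg_def using nn_max by (intro the_equality) auto

lemma nn_LL: "A \<in> LL \<Longrightarrow> nn A \<in> LL"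
  using nn_max[of A "nn A"] unfolding is_max_def negset_def by auto

lemma boxset_LL: "boxset LL (\<subseteq>) (- {0}) = {B. 0 \<notin> B \<and> finite B}"
proof -
  have a: "- {0} \<in> LL" unfolding LL_def by auto
  have "B \<in> LL \<Longrightarrow> (- {0} \<union> nn B = UNIV) \<longleftrightarrow> 0 \<notin> B \<and> finite B" for B
  proof -
    have "(- {0} \<union> nn B = UNIV) \<longleftrightarrow> 0 \<in> nn B" by blast
    also have "\<dots> \<longleftrightarrow> 0 \<notin> B \<and> - B \<in> LL" unfolding nn_def by auto
    also have "\<dots> \<longleftrightarrow> 0 \<notin> B \<and> finite B" unfolding LL_def by auto
    finally show ?thesis .
  qed
  moreover have "0 \<notin> B \<Longrightarrow> B \<in> LL" for B unfolding LL_def by auto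
  ultimately show ?thesis
    unfolding boxset_def top_LL
  proof (intro set_eqI iffI)
    fix B :: "nat set" assume h: "\<And>B. B \<in> LL \<Longrightarrow> (- {0} \<union> nn B = UNIV) = (0 \<notin> B \<and> finite B)"
      "\<And>B. 0 \<notin> B \<Longrightarrow> B \<in> LL"
    { assume "B \<in> {B \<in> LL. ljoin LL (\<subseteq>) (- {0}) (lneg LL (\<subseteq>) B) = UNIV}"
      hence B: "B \<in> LL" and e: "ljoin LL (\<subseteq>) (- {0}) (lneg LL (\<subseteq>) B) = UNIV" by auto
      have "- {0} \<union> nn B = UNIV" using e join_LL[OF a nn_LL[OF B]] lneg_LL[OF B] by simp
      thus "B \<in> {B. 0 \<notin> B \<and> finite B}" using h(1)[OF B] by simp }
    { assume "B \<in> {B. 0 \<notin> B \<and> finite B}"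
      hence c: "0 \<notin> B \<and> finite B" by simp
      hence B: "B \<in> LL" using h(2) by blast
      have "- {0} \<union> nn B = UNIV" using h(1)[OF B] c by simp
      thus "B \<in> {B \<in> LL. ljoin LL (\<subseteq>) (- {0}) (lneg LL (\<subseteq>) B) = UNIV}"
        using B join_LL[OF a nn_LL[OF B]] lneg_LL[OF B] by simp }
  qed
qed

theorem proposition14:
  shows "\<exists>(L :: nat set set) (le :: nat set \<Rightarrow> nat set \<Rightarrow> bool) a.
           infinite L \<and> distributive_lattice_on L le \<and> meet_complemented_on L le \<and>
           a \<in> L \<and> \<not> (\<exists>x. is_max le (boxset L le a) x)"
proof (intro exI conjI)
  have "range (\<lambda>n. {Suc n}) \<subseteq> LL" unfolding LL_def by auto
  moreover have "infinite (range (\<lambda>n::nat. {Suc n}))"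
  proof
    assume "finite (range (\<lambda>n::nat. {Suc n}))"
    hence "finite (UNIV::nat set)" by (rule finite_imageD) (auto simp: inj_on_def)
    thus False by simp
  qed
  ultimately show "infinite LL" using infinite_super by blast
  have lat: "lattice_on LL (\<subseteq>)"
    unfolding lattice_on_def po_on_def using glb_LL lub_LL by blast
  show "distributive_lattice_on LL (\<subseteq>)"
    unfolding distributive_lattice_on_def using lat
    by (simp add: meet_LL join_LL LL_int LL_un Int_Un_distrib)
  show "meet_complemented_on LL (\<subseteq>)"
    unfolding meet_complemented_on_def using lat nn_max by blast
  show "- {0} \<in> LL" unfolding LL_def by auto
  show "\<not> (\<exists>x. is_max (\<subseteq>) (boxset LL (\<subseteq>) (- {0})) x)"
  proof
    assume "\<exists>x. is_max (\<subseteq>) (boxset LL (\<subseteq>) (- {0})) x"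
    then obtain x :: "nat set" where x: "finite x" "\<forall>y. 0 \<notin> y \<and> finite y \<longrightarrow> y \<subseteq> x"
      unfolding boxset_LL is_max_def by auto
    have "finite (insert 0 x)" using x by simp
    then obtain n :: nat where n: "n \<notin> insert 0 x"
      using ex_new_if_finite[OF infinite_UNIV_nat] by blast
    have n0: "0 \<notin> {n}" using n by blast
    have "0 \<notin> {n} \<and> finite {n} \<longrightarrow> {n} \<subseteq> x" using x(2) by (rule spec)
    hence "{n} \<subseteq> x" using n0 by simp
    with n show False by blast
  qed
qed

end
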